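(* Let $\Theta$ be a hypergraph and $p:V(\Theta)\to\mathbb{R}^d$ a configuration such that the framework $(p,\Theta)$ is affinely rigid in $\mathbb{R}^d$ and the edge directions of the body framework $(p,B(\Theta))$ are not on a conic at infinity. Then $(p,\Theta)$ is universally Euclidean rigid.
   Context: A hypergraph $\Theta$ has a finite vertex set $V$ and hyperedges that are subsets of $V$; a framework $(p,\Theta)$ pairs it with a configuration $p:V\to\mathbb{R}^d$. For a group $G$ acting on $\mathbb{R}^k$, frameworks $(p,\Theta),(q,\Theta)$ in $\mathbb{R}^k$ are $G$-equivalent if for each hyperedge $h$ there is $g_h\in G$ with $g_h(p(u))=q(u)$ for all $u\in h$, and $G$-congruent if one $g\in G$ satisfies $g(p(u))=q(u)$ for all $u\in V$. $(p,\Theta)$ is affinely rigid in $\mathbb{R}^d$ if (with $G$ the group of invertible affine maps of $\mathbb{R}^d$) every framework in $\mathbb{R}^d$ that is $G$-equivalent to it is $G$-congruent to it. Viewing $\mathbb{R}^d\subset\mathbb{R}^{d'}$ ($d'\ge d$) as the first $d$ coordinates, $(p,\Theta)$ is universally Euclidean rigid if for every $d'\ge d$, every framework $(q,\Theta)$ in $\mathbb{R}^{d'}$ that is equivalent to it under the Euclidean isometry group of $\mathbb{R}^{d'}$ is congruent to it under that group. The body graph $B(\Theta)$ is the graph on $V$ with an edge $\{u,w\}$ whenever $u\neq w$ lie in a common hyperedge. The edge directions of a graph framework $(p,\Gamma)$ in $\mathbb{R}^d$ are on a conic at infinity if there is a nonzero symmetric $d\times d$ matrix $Q$ with $(p(u)-p(w))^{T}Q(p(u)-p(w))=0$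 for every edge $\{u,w\}$ of $\Gamma$. *)

theory Defs
  imports Main "HOL-Analysis.Analysis"
begin

text \<open>Points of R^k are represented as functions nat => real vanishing at all
coordinates >= k. Thus R^d is literally the subset of R^d' (d <= d') given by the
first d coordinates.\<close>

definition Rn :: "nat \<Rightarrow> (nat \<Rightarrow> real) set" where
  "Rn k = {x. \<forall>i\<ge>k. x i = 0}"

definition edist :: "nat \<Rightarrow> (nat \<Rightarrow> real) \<Rightarrow> (nat \<Rightarrow> real) \<Rightarrow> real" where
  "edist k x y = sqrt (\<Sum>i<k. (x i - y i)^2)"

definition euclid_isos :: "nat \<Rightarrow> ((nat \<Rightarrow> real) \<Rightarrow> (nat \<Rightarrow> real)) set" where
  "euclid_isos k = {g. (\<forall>x\<in>Rn k. g x \<in> Rn k) \<and>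
      (\<forall>x\<in>Rn k. \<forall>y\<in>Rn k. edist k (g x) (g y) = edist k x y)}"

definition affine_maps :: "nat \<Rightarrow> ((nat \<Rightarrow> real) \<Rightarrow> (nat \<Rightarrow> real)) set" where
  "affine_maps k = {g. \<exists>(A::nat \<Rightarrow> nat \<Rightarrow> real) (b::nat \<Rightarrow> real) B.
      (\<forall>i<k. \<forall>j<k. (\<Sum>l<k. A i l * B l j) = (if i = j then 1 else 0)) \<and>
      (\<forall>x\<in>Rn k. g x = (\<lambda>i. if i < k then (\<Sum>j<k. A i j * x j) + b i else 0))}"

definition hypergraph :: "'v set \<Rightarrow> 'v set set \<Rightarrow> bool" where
  "hypergraph V H \<longleftrightarrow> finite V \<and> (\<forall>h\<in>H. h \<subseteq> V)"

definition G_equivalent ::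
  "((nat \<Rightarrow> real) \<Rightarrow> (nat \<Rightarrow> real)) set \<Rightarrow> 'v set set \<Rightarrow> ('v \<Rightarrow> nat \<Rightarrow> real) \<Rightarrow> ('v \<Rightarrow> nat \<Rightarrow> real) \<Rightarrow> bool" where
  "G_equivalent G H p q \<longleftrightarrow> (\<forall>h\<in>H. \<exists>g\<in>G. \<forall>u\<in>h. g (p u) = q u)"

definition G_congruent ::
  "((nat \<Rightarrow> real) \<Rightarrow> (nat \<Rightarrow> real)) set \<Rightarrow> 'v set \<Rightarrow> ('v \<Rightarrow> nat \<Rightarrow> real) \<Rightarrow> ('v \<Rightarrow> nat \<Rightarrow> real) \<Rightarrow> bool" where
  "G_congruent G V p q \<longleftrightarrow> (\<exists>g\<in>G. \<forall>u\<in>V. g (p u) = q u)"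

definition affinely_rigid :: "nat \<Rightarrow> 'v set \<Rightarrow> 'v set set \<Rightarrow> ('v \<Rightarrow> nat \<Rightarrow> real) \<Rightarrow> bool" where
  "affinely_rigid d V H p \<longleftrightarrow>
     (\<forall>q. (\<forall>u\<in>V. q u \<in> Rn d) \<longrightarrow> G_equivalent (affine_maps d) H p q \<longrightarrow>
          G_congruent (affine_maps d) V p q)"

definition universally_euclidean_rigid :: "nat \<Rightarrow> 'v set \<Rightarrow> 'v set set \<Rightarrow> ('v \<Rightarrow> nat \<Rightarrow> real) \<Rightarrow> bool" where
  "universally_euclidean_rigid d V H p \<longleftrightarrow>
     (\<forall>d'\<ge>d. \<forall>q. (\<forall>u\<in>V. q u \<in> Rn d') \<longrightarrow> G_equivalent (euclid_isos d') H p q \<longrightarrow>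
          G_congruent (euclid_isos d') V p q)"

definition body_edge :: "'v set set \<Rightarrow> 'v \<Rightarrow> 'v \<Rightarrow> bool" where
  "body_edge H u w \<longleftrightarrow> u \<noteq> w \<and> (\<exists>h\<in>H. u \<in> h \<and> w \<in> h)"

definition on_conic_at_infinity :: "nat \<Rightarrow> ('v \<Rightarrow> 'v \<Rightarrow> bool) \<Rightarrow> ('v \<Rightarrow> nat \<Rightarrow> real) \<Rightarrow> bool" where
  "on_conic_at_infinity d E p \<longleftrightarrow>
     (\<exists>Q::nat \<Rightarrow> nat \<Rightarrow> real.
        (\<forall>i<d. \<forall>j<d. Q i j = Q j i) \<and> (\<exists>i<d. \<exists>j<d. Q i j \<noteq> 0) \<and>
        (\<forall>u w. E u w \<longrightarrow>
           (\<Sum>i<d. \<Sum>j<d. (p u i - p w i) * Q i j * (p u j - p w j)) = 0))"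

end

theory Submission
  imports Defs
begin


definition ip :: "nat \<Rightarrow> (nat\<Rightarrow>real) \<Rightarrow> (nat\<Rightarrow>real) \<Rightarrow> real" where
  "ip n x y = (\<Sum>i<n. x i * y i)"

lemma ip_comm: "ip n x y = ip n y x"
  by (simp add: ip_def mult.commute)

lemma ip_lin_right: "ip n u (\<lambda>i. \<Sum>j<m. z j * b j i) = (\<Sum>j<m. z j * ip n u (b j))"
  unfolding ip_def by (simp add: sum_distrib_left mult_ac sum.swap[of _ "{..<n}"])

lemma ip_lin_left: "ip n (\<lambda>i. \<Sum>j<m. z j * b j i) u = (\<Sum>j<m. z j * ip n (b j) u)"
  unfolding ip_def by (simp add: sum_distrib_left sum_distrib_right mult_ac sum.swap[of _ "{..<n}"])

lemma ip_lincomb: "ip n (\<lambda>i. \<Sum>j<m. z j * b j i) (\<lambda>i. \<Sum>l<m. w l * b l i)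
   = (\<Sum>j<m. \<Sum>l<m. z j * w l * ip n (b j) (b l))"
  by (simp add: ip_lin_left ip_lin_right sum_distrib_left mult_ac)

lemma ip_orthonormal:
  fixes m :: nat
  assumes "\<forall>j<m. \<forall>l<m. ip n (b j) (b l) = (if j = l then 1 else 0)"
  shows "ip n (\<lambda>i. \<Sum>j<m. z j * b j i) (\<lambda>i. \<Sum>l<m. w l * b l i) = (\<Sum>j<m. z j * w j)"
proof -
  have "ip n (\<lambda>i. \<Sum>j<m. z j * b j i) (\<lambda>i. \<Sum>l<m. w l * b l i)
     = (\<Sum>j<m. \<Sum>l<m. z j * w l * (if j = l then 1 else 0))"
    unfolding ip_lincomb using assms by (intro sum.cong refl) auto
  also have "\<dots> = (\<Sum>j<m. z j * w j)"
    proof (intro sum.cong refl)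
    fix j assume "j \<in> {..<m}"
    then show "(\<Sum>l<m. z j * w l * (if j = l then 1 else 0)) = z j * w j"
      using sum.delta'[of "{..<m}" j "\<lambda>l. z l * w l"] by (simp add: if_distrib cong: if_cong)
  qed
  finally show ?thesis .
qed

lemma ip_diff: "ip n (\<lambda>i. u i - v i) (\<lambda>i. u i - v i) = ip n u u - 2 * ip n u v + ip n v v"
  unfolding ip_def by (simp add: algebra_simps power2_eq_square sum.distrib sum_subtractf sum_distrib_left)

lemma ip_nonneg: "ip n u u \<ge> 0"
  unfolding ip_def by (intro sum_nonneg) simp

lemma edist_ip: "edist n x y = sqrt (ip n (\<lambda>i. x i - y i) (\<lambda>i. x i - y i))"
  unfolding edist_def ip_def by (simp add: power2_eq_square)

lemma ip_zero_imp: "ip n u u = 0 \<Longrightarrow> i < n \<Longrightarrow> u i = 0"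
  unfolding ip_def using sum_nonneg_eq_0_iff[of "{..<n}" "\<lambda>i. u i * u i"] by auto

lemma ip_coord_le: "i < n \<Longrightarrow> (u i)^2 \<le> ip n u u"
  unfolding ip_def power2_eq_square by (rule member_le_sum) auto



lemma exists_orth:
  fixes m n :: nat
  assumes mn: "m < n" and inR: "\<forall>j<m. a j \<in> Rn n"
    and on: "\<forall>j<m. \<forall>l<m. ip n (a j) (a l) = (if j = l then 1 else 0)"
  shows "\<exists>c. c \<in> Rn n \<and> ip n c c = 1 \<and> (\<forall>j<m. ip n c (a j) = 0)"
proof -
  define r where "r i = (\<lambda>l. if l < n then (if l = i then 1 else 0) - (\<Sum>k<m. a k i * a k l) else 0)" for i
  have "\<exists>i<n. r i i \<noteq> 0"
  proof (rule ccontr)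
    assume "\<not> ?thesis"
    then have h: "\<forall>i<n. (\<Sum>k<m. a k i * a k i) = 1" by (auto simp: r_def)
    have "real n = (\<Sum>i<n. (\<Sum>k<m. a k i * a k i))" using h by simp
    also have "\<dots> = (\<Sum>k<m. ip n (a k) (a k))" unfolding ip_def by (rule sum.swap)
    also have "\<dots> = real m" using on by simp
    finally show False using mn by simp
  qed
  then obtain i where i: "i < n" "r i i \<noteq> 0" by blast
  have orth: "ip n (r i) (a j) = 0" if j: "j < m" for j
  proof -
    have "ip n (r i) (a j) = (\<Sum>l<n. ((if l = i then 1 else 0) - (\<Sum>k<m. a k i * a k l)) * a j l)"
      unfolding ip_def r_def by (intro sum.cong refl) auto
    also have "\<dots> = (\<Sum>l<n. (if l = i then a j l else 0)) - (\<Sum>l<n. \<Sum>k<m. a k i * (a k l * a j l))"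
      unfolding left_diff_distrib sum_subtractf
      by (intro arg_cong2[where f="(-)"] sum.cong refl) (auto simp: sum_distrib_right mult.assoc)
    also have "\<dots> = a j i - (\<Sum>k<m. a k i * ip n (a k) (a j))"
      using i by (simp add: ip_def sum_distrib_left sum.swap[of _ "{..<n}"])
    also have "(\<Sum>k<m. a k i * ip n (a k) (a j)) = (\<Sum>k<m. if k = j then a k i else 0)"
      using on j by (intro sum.cong refl) auto
    also have "\<dots> = a j i" using j by simp
    finally show ?thesis by simp
  qed
  have pos: "ip n (r i) (r i) > 0"
  proof -
    have "(r i i)^2 > 0" using i by simp
    with ip_coord_le[OF i(1), of "r i"] show ?thesis by linarith
  qed
  define s where "s = sqrt (ip n (r i) (r i))"
  have s: "s > 0" "s * s = ip n (r i) (r i)" using pos by (auto simp: s_def)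
  define c where "c = (\<lambda>l. r i l / s)"
  have "c \<in> Rn n" by (auto simp: c_def r_def Rn_def)
  moreover have "ip n c c = 1"
  proof -
    have "ip n c c = ip n (r i) (r i) / (s * s)" unfolding c_def ip_def
      by (simp add: sum_divide_distrib[symmetric])
    then show ?thesis using s pos by simp
  qed
  moreover have "\<forall>j<m. ip n c (a j) = 0" using orth unfolding c_def ip_def
    by (simp add: sum_divide_distrib[symmetric])
  ultimately show ?thesis by blast
qed

lemma extend_on:
  fixes m n :: nat
  assumes "m \<le> n" "\<forall>j<m. a j \<in> Rn n"
    "\<forall>j<m. \<forall>l<m. ip n (a j) (a l) = (if j = l then 1 else 0)"
  shows "\<exists>b. (\<forall>j<n. b j \<in> Rn n) \<and> (\<forall>j<n. \<forall>l<n. ip n (b j) (b l) = (if j = l then 1 else 0))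
           \<and> (\<forall>j<m. b j = a j)"
  using assms
proof (induction "n - m" arbitrary: m a)
  case 0
  then have "m = n" by simp
  then show ?case using 0 by blast
next
  case (Suc k)
  then have mn: "m < n" by simp
  obtain c where c: "c \<in> Rn n" "ip n c c = 1" "\<forall>j<m. ip n c (a j) = 0"
    using exists_orth[OF mn Suc.prems(2,3)] by blast
  define a' where "a' = a(m := c)"
  have "\<exists>b. (\<forall>j<n. b j \<in> Rn n) \<and> (\<forall>j<n. \<forall>l<n. ip n (b j) (b l) = (if j = l then 1 else 0))
           \<and> (\<forall>j<Suc m. b j = a' j)"
  proof (rule Suc.hyps)
    show "k = n - Suc m" using Suc.hyps(2) by simp
    show "Suc m \<le> n" using mn by simp
    show "\<forall>j<Suc m. a' j \<in> Rn n" using Suc.prems(2) c by (auto simp: a'_def less_Suc_eq)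
    show "\<forall>j<Suc m. \<forall>l<Suc m. ip n (a' j) (a' l) = (if j = l then 1 else 0)"
      using Suc.prems(3) c by (auto simp: a'_def less_Suc_eq ip_comm)
  qed
  then show ?case by (auto simp: a'_def)
qed



lemma ip_polar: "ip n a b = (ip n a a + ip n b b - ip n (\<lambda>i. a i - b i) (\<lambda>i. a i - b i)) / 2"
  by (simp add: ip_diff ip_comm)

lemma iso_affine:
  fixes n :: nat
  assumes g: "g \<in> euclid_isos n"
  shows "\<exists>c M. (\<forall>x\<in>Rn n. \<forall>i<n. g x i = c i + (\<Sum>j<n. x j * M i j)) \<and> (\<forall>i<n. \<forall>j<n. (M i j)^2 \<le> 1)"
proof -
  have D: "ip n (\<lambda>i. g x i - g y i) (\<lambda>i. g x i - g y i) = ip n (\<lambda>i. x i - y i) (\<lambda>i. x i - y i)"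
    if "x \<in> Rn n" "y \<in> Rn n" for x y
    using g that ip_nonneg unfolding euclid_isos_def edist_ip by auto
  define z where "z = (\<lambda>_::nat. 0::real)"
  have z: "z \<in> Rn n" by (simp add: z_def Rn_def)
  define f where "f x = (\<lambda>i. g x i - g z i)" for x
  have nf: "ip n (f x) (f x) = ip n x x" if "x \<in> Rn n" for x
    using D[OF that z] by (simp add: f_def z_def)
  have fip: "ip n (f x) (f y) = ip n x y" if "x \<in> Rn n" "y \<in> Rn n" for x y
  proof -
    have "(\<lambda>i. f x i - f y i) = (\<lambda>i. g x i - g y i)" by (simp add: f_def)
    then show ?thesis using ip_polar[of n "f x" "f y"] ip_polar[of n x y] nf[OF that(1)] nf[OF that(2)] D[OF that]
      by simp
  qed
  define e where "e j = (\<lambda>i. if i = j then 1 else 0::real)" for j :: nat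
  have eR: "e j \<in> Rn n" if "j < n" for j using that by (auto simp: e_def Rn_def)
  have xe: "ip n x (e j) = x j" if "j < n" for x j
    using that unfolding ip_def e_def by (simp add: if_distrib cong: if_cong)
  have ee: "\<forall>j<n. \<forall>l<n. ip n (f (e j)) (f (e l)) = (if j = l then 1 else 0)"
    using fip eR xe by (auto simp: e_def)
  define M where "M i j = f (e j) i" for i j
  have main: "g x i = g z i + (\<Sum>j<n. x j * M i j)" if x: "x \<in> Rn n" and i: "i < n" for x i
  proof -
    define y where "y = (\<lambda>i. \<Sum>j<n. x j * f (e j) i)"
    have "ip n (f x) y = (\<Sum>j<n. x j * ip n (f x) (f (e j)))" unfolding y_def by (rule ip_lin_right)
    also have "\<dots> = (\<Sum>j<n. x j * x j)" using fip[OF x eR] xe by (intro sum.cong refl) auto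
    finally have 1: "ip n (f x) y = (\<Sum>j<n. x j * x j)" .
    have 2: "ip n y y = (\<Sum>j<n. x j * x j)" unfolding y_def by (rule ip_orthonormal[OF ee])
    have 3: "ip n (f x) (f x) = (\<Sum>j<n. x j * x j)" using nf[OF x] by (simp add: ip_def)
    have "ip n (\<lambda>i. f x i - y i) (\<lambda>i. f x i - y i) = 0" using 1 2 3 by (simp add: ip_diff)
    then have "f x i - y i = 0" using ip_zero_imp[OF _ i] by blast
    then show ?thesis by (simp add: f_def y_def M_def)
  qed
  have bound: "(M i j)^2 \<le> 1" if "i < n" "j < n" for i j
    using ip_coord_le[OF that(1), of "f (e j)"] ee that by (simp add: M_def)
  show ?thesis using main bound by blast
qed



lemma inv_rank1:
  fixes d :: nat and \<alpha> :: "nat \<Rightarrow> real"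
  assumes "0 < d" "1 + \<alpha> 0 \<noteq> 0" "i < d" "j < d"
  shows "(\<Sum>l<d. ((if i = l then 1 else 0) + (if i = 0 then \<alpha> l else 0)) *
           ((if l = j then 1 else 0) - (if l = 0 then \<alpha> j / (1 + \<alpha> 0) else 0))) = (if i = j then 1 else 0)"
proof -
  define s where "s = \<alpha> j / (1 + \<alpha> 0)"
  have "(\<Sum>l<d. ((if i = l then 1 else 0) + (if i = 0 then \<alpha> l else 0)) *
           ((if l = j then 1 else 0) - (if l = 0 then s else 0)))
     = (\<Sum>l<d. (if l = i then (if i = j then 1 else 0) else 0)) - (\<Sum>l<d. (if l = i then (if i = 0 then s else 0) else 0))
       + (\<Sum>l<d. (if l = j then (if i = 0 then \<alpha> j else 0) else 0)) - (\<Sum>l<d. (if l = 0 then (if i = 0 then \<alpha> 0 * s else 0) else 0))"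
    by (simp only: sum.distrib[symmetric] sum_subtractf[symmetric]) (intro sum.cong refl, auto simp: algebra_simps)
  also have "\<dots> = (if i = j then 1 else 0) - (if i = 0 then s else 0) + (if i = 0 then \<alpha> j else 0) - (if i = 0 then \<alpha> 0 * s else 0)"
    using assms by simp
  also have "\<dots> = (if i = j then 1 else 0)"
  proof -
    have "(1 + \<alpha> 0) * s = \<alpha> j" using assms(2) by (simp add: s_def)
    then show ?thesis by (auto simp: algebra_simps)
  qed
  finally show ?thesis unfolding s_def .
qed


lemma quad:
  fixes d n :: nat
  shows "(\<Sum>i<d. \<Sum>j<d. v i * ((\<Sum>k<n. A k i * A k j) - (if i=j then 1 else 0)) * v j)
   = (\<Sum>k<n. (\<Sum>i<d. A k i * v i) * (\<Sum>j<d. A k j * v j)) - (\<Sum>i<d. v i * (v i::real))"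
proof -
  have "(\<Sum>i<d. \<Sum>j<d. v i * ((\<Sum>k<n. A k i * A k j) - (if i=j then 1 else 0)) * v j)
     = (\<Sum>i<d. (\<Sum>j<d. \<Sum>k<n. v i * A k i * A k j * v j) - (\<Sum>j<d. (if i = j then v i * v j else 0)))"
    unfolding sum_subtractf[symmetric]
    by (intro sum.cong refl) (simp add: right_diff_distrib left_diff_distrib sum_distrib_left sum_distrib_right mult_ac)
  also have "\<dots> = (\<Sum>i<d. \<Sum>j<d. \<Sum>k<n. v i * A k i * A k j * v j) - (\<Sum>i<d. v i * v i)"
    by (simp add: sum_subtractf)
  also have "(\<Sum>i<d. \<Sum>j<d. \<Sum>k<n. v i * A k i * A k j * v j) = (\<Sum>i<d. \<Sum>k<n. \<Sum>j<d. v i * A k i * A k j * v j)"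
    by (rule sum.cong[OF refl], rule sum.swap)
  also have "\<dots> = (\<Sum>k<n. \<Sum>i<d. \<Sum>j<d. v i * A k i * A k j * v j)"
    by (rule sum.swap)
  also have "\<dots> = (\<Sum>k<n. (\<Sum>i<d. A k i * v i) * (\<Sum>j<d. A k j * v j))"
    by (simp add: sum_distrib_left sum_distrib_right mult_ac)
  finally show ?thesis .
qed

lemma sum_Rn_reduce:
  fixes d n :: nat
  assumes "x \<in> Rn d" "d \<le> n"
  shows "(\<Sum>j<n. x j * F j) = (\<Sum>j<d. x j * F j)"
  by (rule sum.mono_neutral_right) (use assms in \<open>auto simp: Rn_def\<close>)

lemma Rn_mono: "x \<in> Rn d \<Longrightarrow> d \<le> n \<Longrightarrow> x \<in> Rn n"
  by (auto simp: Rn_def)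

lemma iso_ip:
  assumes "g \<in> euclid_isos n" "x \<in> Rn n" "y \<in> Rn n"
  shows "ip n (\<lambda>i. g x i - g y i) (\<lambda>i. g x i - g y i) = ip n (\<lambda>i. x i - y i) (\<lambda>i. x i - y i)"
  using assms ip_nonneg unfolding euclid_isos_def edist_ip by auto



lemma coord_affine:
  fixes d d' k :: nat
  assumes d1: "1 \<le> d" and dd: "d \<le> d'" and hV: "\<forall>h\<in>H. h \<subseteq> V" and pR: "\<forall>u\<in>V. p u \<in> Rn d"
   and ar: "affinely_rigid d V H p"
   and hyp: "\<forall>h\<in>H. \<exists>c M. (\<forall>u\<in>h. \<forall>i<d'. q u i = c i + (\<Sum>j<d. p u j * M i j)) \<and> (\<forall>i<d'. \<forall>j<d'. (M i j)^2 \<le> 1)"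
   and k: "k < d'"
  shows "\<exists>a b. \<forall>u\<in>V. q u k = (\<Sum>j<d. a j * p u j) + b"
proof -
  have d0: "0 < d" using d1 by simp
  define q' where "q' u = (\<lambda>i. if i < d then p u i + (if i = 0 then q u k / 2 else 0) else 0)" for u
  have q'R: "\<forall>u\<in>V. q' u \<in> Rn d" by (auto simp: q'_def Rn_def)
  have "G_equivalent (affine_maps d) H p q'"
    unfolding G_equivalent_def
  proof
    fix h assume h: "h \<in> H"
    obtain c M where cM: "\<forall>u\<in>h. \<forall>i<d'. q u i = c i + (\<Sum>j<d. p u j * M i j)"
      "\<forall>i<d'. \<forall>j<d'. (M i j)^2 \<le> 1" using hyp h by blast
    define \<alpha> where "\<alpha> j = M k j / 2" for j
    have "(M k 0)^2 \<le> 1" using cM(2) k d0 dd by auto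
    then have "\<bar>M k 0\<bar> \<le> 1" using abs_le_square_iff[of "M k 0" 1] by simp
    then have a0: "1 + \<alpha> 0 \<noteq> 0" by (auto simp: \<alpha>_def)
    define A where "A i j = (if i = j then 1 else 0) + (if i = 0 then \<alpha> j else 0)" for i j :: nat
    define B where "B l j = (if l = j then 1 else 0) - (if l = 0 then \<alpha> j / (1 + \<alpha> 0) else 0)" for l j :: nat
    define bv where "bv i = (if i = 0 then c k / 2 else 0)" for i :: nat
    define g where "g x = (\<lambda>i. if i < d then (\<Sum>j<d. A i j * x j) + bv i else 0)" for x :: "nat \<Rightarrow> real"
    have "g \<in> affine_maps d"
      unfolding affine_maps_def
    proof (intro CollectI exI conjI)
      show "\<forall>i<d. \<forall>j<d. (\<Sum>l<d. A i l * B l j) = (if i = j then 1 else 0)"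
        using inv_rank1[where \<alpha>=\<alpha>, OF d0 a0] unfolding A_def B_def by blast
      show "\<forall>x\<in>Rn d. g x = (\<lambda>i. if i < d then (\<Sum>j<d. A i j * x j) + bv i else 0)"
        by (simp add: g_def)
    qed
    moreover have "\<forall>u\<in>h. g (p u) = q' u"
    proof
      fix u assume u: "u \<in> h"
      have sA: "(\<Sum>j<d. A i j * p u j) = p u i + (if i = 0 then (\<Sum>j<d. \<alpha> j * p u j) else 0)"
        if "i < d" for i
      proof -
        have "(\<Sum>j<d. A i j * p u j) = (\<Sum>j<d. (if i = j then p u j else 0) + (if i = 0 then \<alpha> j * p u j else 0))"
          by (intro sum.cong refl) (auto simp: A_def algebra_simps)
        also have "\<dots> = (\<Sum>j<d. (if i = j then p u j else 0)) + (\<Sum>j<d. (if i = 0 then \<alpha> j * p u j else 0))"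
          by (rule sum.distrib)
        also have "\<dots> = p u i + (if i = 0 then (\<Sum>j<d. \<alpha> j * p u j) else 0)"
          using that by (cases "i = 0") simp_all
        finally show ?thesis .
      qed
      have qk: "q u k = c k + (\<Sum>j<d. p u j * M k j)" using cM(1) u k by blast
      have "(\<Sum>j<d. \<alpha> j * p u j) = (\<Sum>j<d. p u j * M k j) / 2"
        by (simp add: \<alpha>_def sum_divide_distrib mult.commute)
      then show "g (p u) = q' u"
        using sA qk by (auto simp: g_def q'_def bv_def)
    qed
    ultimately show "\<exists>g\<in>affine_maps d. \<forall>u\<in>h. g (p u) = q' u" by blast
  qed
  then have "G_congruent (affine_maps d) V p q'"
    using ar q'R unfolding affinely_rigid_def by blast
  then obtain G where G: "G \<in> affine_maps d" "\<forall>u\<in>V. G (p u) = q' u"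
    unfolding G_congruent_def by blast
  then obtain A' b' where Ab: "\<forall>x\<in>Rn d. G x = (\<lambda>i. if i < d then (\<Sum>j<d. A' i j * x j) + b' i else 0)"
    unfolding affine_maps_def by blast
  have "\<forall>u\<in>V. q u k = (\<Sum>j<d. (2 * A' 0 j - 2 * (if j = 0 then 1 else 0)) * p u j) + 2 * b' 0"
  proof
    fix u assume u: "u \<in> V"
    have "G (p u) 0 = q' u 0" using G(2) u by simp
    then have e: "(\<Sum>j<d. A' 0 j * p u j) + b' 0 = p u 0 + q u k / 2"
      using Ab pR u d0 by (simp add: q'_def)
    have "(\<Sum>j<d. (2 * A' 0 j - 2 * (if j = 0 then 1 else 0)) * p u j)
        = 2 * (\<Sum>j<d. A' 0 j * p u j) - 2 * p u 0"
    proof -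
      have "(\<Sum>j<d. (2 * A' 0 j - 2 * (if j = 0 then 1 else 0)) * p u j)
          = (\<Sum>j<d. 2 * (A' 0 j * p u j)) - (\<Sum>j<d. 2 * (if j = 0 then p u j else 0))"
        unfolding sum_subtractf[symmetric] by (intro sum.cong refl) (auto simp: algebra_simps)
      also have "\<dots> = 2 * (\<Sum>j<d. A' 0 j * p u j) - 2 * p u 0"
        using d0 by (simp add: sum_distrib_left[symmetric])
      finally show ?thesis .
    qed
    then show "q u k = (\<Sum>j<d. (2 * A' 0 j - 2 * (if j = 0 then 1 else 0)) * p u j) + 2 * b' 0"
      using e by simp
  qed
  then show ?thesis
    by (intro exI[of _ "\<lambda>j. 2 * A' 0 j - 2 * (if j = 0 then 1 else 0)"] exI[of _ "2 * b' 0"]) simp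
qed



theorem theorem4p2:
  fixes V :: "'v set" and H :: "'v set set" and p :: "'v \<Rightarrow> nat \<Rightarrow> real" and d :: nat
  assumes "d \<ge> 1"
    and "hypergraph V H"
    and "\<forall>u\<in>V. p u \<in> Rn d"
    and "affinely_rigid d V H p"
    and "\<not> on_conic_at_infinity d (body_edge H) p"
  shows "universally_euclidean_rigid d V H p"
  unfolding universally_euclidean_rigid_def
proof (intro allI impI)
  fix d' q
  assume dd: "d \<le> d'" and qR: "\<forall>u\<in>V. q u \<in> Rn d'" and eq: "G_equivalent (euclid_isos d') H p q"
  have hV: "\<forall>h\<in>H. h \<subseteq> V" using assms(2) by (simp add: hypergraph_def)
  have pR: "\<forall>u\<in>V. p u \<in> Rn d" by fact
  have pR': "\<forall>u\<in>V. p u \<in> Rn d'" using pR dd Rn_mono by blast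
  have hyp: "\<forall>h\<in>H. \<exists>c M. (\<forall>u\<in>h. \<forall>i<d'. q u i = c i + (\<Sum>j<d. p u j * M i j)) \<and> (\<forall>i<d'. \<forall>j<d'. (M i j)^2 \<le> 1)"
  proof
    fix h assume h: "h \<in> H"
    obtain g where g: "g \<in> euclid_isos d'" "\<forall>u\<in>h. g (p u) = q u"
      using eq h unfolding G_equivalent_def by blast
    obtain c M where cM: "\<forall>x\<in>Rn d'. \<forall>i<d'. g x i = c i + (\<Sum>j<d'. x j * M i j)" "\<forall>i<d'. \<forall>j<d'. (M i j)^2 \<le> 1"
      using iso_affine[OF g(1)] by blast
    have "\<forall>u\<in>h. \<forall>i<d'. q u i = c i + (\<Sum>j<d. p u j * M i j)"
    proof (intro ballI allI impI)
      fix u i assume u: "u \<in> h" and i: "i < d'"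
      have uV: "u \<in> V" using u h hV by blast
      have "q u = g (p u)" using g(2) u by simp
      then have "q u i = c i + (\<Sum>j<d'. p u j * M i j)" using cM(1) pR' uV i by simp
      also have "(\<Sum>j<d'. p u j * M i j) = (\<Sum>j<d. p u j * M i j)"
        by (rule sum_Rn_reduce[OF pR[rule_format, OF uV] dd])
      finally show "q u i = c i + (\<Sum>j<d. p u j * M i j)" .
    qed
    then show "\<exists>c M. (\<forall>u\<in>h. \<forall>i<d'. q u i = c i + (\<Sum>j<d. p u j * M i j)) \<and> (\<forall>i<d'. \<forall>j<d'. (M i j)^2 \<le> 1)"
      using cM(2) by blast
  qed
  have "\<forall>k<d'. \<exists>a b. \<forall>u\<in>V. q u k = (\<Sum>j<d. a j * p u j) + b"
  proof (intro allI impI)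
    fix k assume "k < d'"
    then show "\<exists>a b. \<forall>u\<in>V. q u k = (\<Sum>j<d. a j * p u j) + b"
      by (rule coord_affine[OF assms(1) dd hV pR assms(4) hyp])
  qed
  then have "\<forall>k. \<exists>ab. k < d' \<longrightarrow> (\<forall>u\<in>V. q u k = (\<Sum>j<d. fst ab j * p u j) + snd ab)"
    by auto
  then obtain f where f: "\<forall>k. k < d' \<longrightarrow> (\<forall>u\<in>V. q u k = (\<Sum>j<d. fst (f k) j * p u j) + snd (f k))"
    by (rule choice[THEN exE]) blast
  define A where "A k j = fst (f k) j" for k j
  define bb where "bb k = snd (f k)" for k
  have Ab: "\<forall>k<d'. \<forall>u\<in>V. q u k = (\<Sum>j<d. A k j * p u j) + bb k"
    using f by (simp add: A_def bb_def)
  define Q where "Q i j = (\<Sum>k<d'. A k i * A k j) - (if i = j then 1 else 0)" for i j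
  have Qsym: "\<forall>i<d. \<forall>j<d. Q i j = Q j i" by (auto simp: Q_def mult.commute)
  have Qedge: "\<forall>u w. body_edge H u w \<longrightarrow>
           (\<Sum>i<d. \<Sum>j<d. (p u i - p w i) * Q i j * (p u j - p w j)) = 0"
  proof (intro allI impI)
    fix u w assume "body_edge H u w"
    then obtain h where h: "h \<in> H" "u \<in> h" "w \<in> h" by (auto simp: body_edge_def)
    have uV: "u \<in> V" and wV: "w \<in> V" using h hV by blast+
    obtain g where g: "g \<in> euclid_isos d'" "\<forall>u\<in>h. g (p u) = q u"
      using eq h unfolding G_equivalent_def by blast
    define v where "v j = p u j - p w j" for j
    have "ip d' (\<lambda>i. q u i - q w i) (\<lambda>i. q u i - q w i) = ip d' (\<lambda>i. p u i - p w i) (\<lambda>i. p u i - p w i)"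
      using iso_ip[OF g(1), of "p u" "p w"] g(2) h pR' uV wV by simp
    also have "\<dots> = (\<Sum>j<d. v j * v j)"
    proof -
      have vR: "(\<lambda>j. p u j - p w j) \<in> Rn d" using pR uV wV by (simp add: Rn_def)
      show ?thesis unfolding ip_def v_def by (rule sum_Rn_reduce[OF vR dd])
    qed
    finally have e1: "ip d' (\<lambda>i. q u i - q w i) (\<lambda>i. q u i - q w i) = (\<Sum>j<d. v j * v j)" .
    have qd: "q u k - q w k = (\<Sum>j<d. A k j * v j)" if "k < d'" for k
      using Ab that uV wV by (simp add: v_def right_diff_distrib sum_subtractf)
    have "ip d' (\<lambda>i. q u i - q w i) (\<lambda>i. q u i - q w i) = (\<Sum>k<d'. (\<Sum>i<d. A k i * v i) * (\<Sum>j<d. A k j * v j))"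
      unfolding ip_def using qd by (intro sum.cong refl) simp
    then have "(\<Sum>i<d. \<Sum>j<d. v i * Q i j * v j) = 0"
      unfolding Q_def quad using e1 by simp
    then show "(\<Sum>i<d. \<Sum>j<d. (p u i - p w i) * Q i j * (p u j - p w j)) = 0"
      by (simp add: v_def)
  qed
  have nc: "\<not> ((\<forall>i<d. \<forall>j<d. Q i j = Q j i) \<and> (\<exists>i<d. \<exists>j<d. Q i j \<noteq> 0) \<and>
        (\<forall>u w. body_edge H u w \<longrightarrow>
           (\<Sum>i<d. \<Sum>j<d. (p u i - p w i) * Q i j * (p u j - p w j)) = 0))"
  proof
    assume X: "(\<forall>i<d. \<forall>j<d. Q i j = Q j i) \<and> (\<exists>i<d. \<exists>j<d. Q i j \<noteq> 0) \<and>
        (\<forall>u w. body_edge H u w \<longrightarrow>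
           (\<Sum>i<d. \<Sum>j<d. (p u i - p w i) * Q i j * (p u j - p w j)) = 0)"
    have "on_conic_at_infinity d (body_edge H) p"
      unfolding on_conic_at_infinity_def by (rule exI[of _ Q], rule X)
    with assms(5) show False by contradiction
  qed
  have Q0: "\<forall>i<d. \<forall>j<d. Q i j = 0"
  proof (rule ccontr)
    assume "\<not> ?thesis"
    then have "\<exists>i<d. \<exists>j<d. Q i j \<noteq> 0" by auto
    from nc conjI[OF Qsym conjI[OF this Qedge]] show False by (rule notE)
  qed
  define a where "a j = (\<lambda>k. if k < d' then A k j else 0)" for j
  have aR: "\<forall>j<d. a j \<in> Rn d'" by (auto simp: a_def Rn_def)
  have aon: "\<forall>j<d. \<forall>l<d. ip d' (a j) (a l) = (if j = l then 1 else 0)"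
  proof (intro allI impI)
    fix j l assume "j < d" "l < d"
    then have "Q j l = 0" using Q0 by blast
    moreover have "ip d' (a j) (a l) = (\<Sum>k<d'. A k j * A k l)" unfolding ip_def a_def by simp
    ultimately show "ip d' (a j) (a l) = (if j = l then 1 else 0)" by (simp add: Q_def)
  qed
  obtain b where b: "\<forall>j<d'. b j \<in> Rn d'" "\<forall>j<d'. \<forall>l<d'. ip d' (b j) (b l) = (if j = l then 1 else 0)"
    "\<forall>j<d. b j = a j"
    using extend_on[OF dd aR aon] by blast
  define g where "g x = (\<lambda>i. if i < d' then (\<Sum>j<d'. x j * b j i) + bb i else 0)" for x :: "nat \<Rightarrow> real"
  have "g \<in> euclid_isos d'"
    unfolding euclid_isos_def
  proof (intro CollectI conjI ballI)
    fix x assume "x \<in> Rn d'" then show "g x \<in> Rn d'" by (simp add: g_def Rn_def)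
  next
    fix x y assume x: "x \<in> Rn d'" and y: "y \<in> Rn d'"
    have "ip d' (\<lambda>i. g x i - g y i) (\<lambda>i. g x i - g y i)
        = ip d' (\<lambda>i. \<Sum>j<d'. (x j - y j) * b j i) (\<lambda>i. \<Sum>j<d'. (x j - y j) * b j i)"
      unfolding ip_def g_def by (intro sum.cong refl) (simp add: left_diff_distrib sum_subtractf)
    also have "\<dots> = (\<Sum>j<d'. (x j - y j) * (x j - y j))"
      by (rule ip_orthonormal[OF b(2)])
    also have "\<dots> = ip d' (\<lambda>i. x i - y i) (\<lambda>i. x i - y i)" by (simp add: ip_def)
    finally show "edist d' (g x) (g y) = edist d' x y" by (simp add: edist_ip)
  qed
  moreover have "\<forall>u\<in>V. g (p u) = q u"
  proof
    fix u assume uV: "u \<in> V"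
    show "g (p u) = q u"
    proof
      fix i
      show "g (p u) i = q u i"
      proof (cases "i < d'")
        case True
        have "(\<Sum>j<d'. p u j * b j i) = (\<Sum>j<d. p u j * b j i)"
          by (rule sum_Rn_reduce[OF pR[rule_format, OF uV] dd])
        also have "\<dots> = (\<Sum>j<d. A i j * p u j)"
          using b(3) True by (intro sum.cong refl) (simp add: a_def mult.commute)
        finally show ?thesis using Ab True uV by (simp add: g_def)
      next
        case False
        then show ?thesis using qR uV by (simp add: g_def Rn_def)
      qed
    qed
  qed
  ultimately show "G_congruent (euclid_isos d') V p q"
    unfolding G_congruent_def by blast
qed

end
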